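(* Let $n\in\mathbf{N}$, $b\in\mathbf{N}$ with $b>n/2$, and $\ell\in\mathbf{N}$. There exists $C>0$ such that $\|m^2_{b,\ell,H}(\cdot,t)\|_{L^2(\mathbf{R}^n_\xi)}\le Ct^{b-1}e^{-t/2}$ for all $t\ge1$.
   Context: Expressions $\cos(t\sqrt z)$, $\sin(t\sqrt z)/\sqrt z$ denote the entire functions $\sum_m(-1)^mt^{2m}z^m/(2m)!$, $\sum_m(-1)^mt^{2m+1}z^m/(2m+1)!$ of $z\in\mathbf{R}$. For $r\ge0$, $c\in\mathbf{R}$, $a\in[0,1]$ with $4ar^2<1$, $t>0$: $f(r,c,t)=\cos(t\sqrt{r^2-c})$, $h(r,a,t)=\frac{1}{\sqrt{1-4ar^2}}\exp(-\frac{2tr^2}{1+\sqrt{1-4ar^2}})$. For $\xi\neq0$: $W^2_b(\xi,t)=2t^{-1}\sum_{k=0}^{b-2}(\frac14)^k\frac1{k!}\partial_c^{k+1}f(|\xi|,0,t)$ if $b\ge2$ and $W^2_1\equiv0$; $D^2_\ell(\xi,t)=\sum_{k=0}^{\ell-1}\frac1{k!}\partial_a^kh(|\xi|,0,t)$. Let $\chi_H$ be a smooth function on $[0,\infty)$ with $\chi_H(r)=1$ for $r\ge2$ and $\chi_H(r)=0$ for $r\le1$. Define $m^2_{b,\ell,H}(\xi,t)=\chi_H(|\xi|)\Big[e^{-t/2}\frac{\sin(t\sqrt{|\xi|^2-1/4})}{\sqrt{|\xi|^2-1/4}}-e^{-t/2}W^2_b(\xi,t)-D^2_\ell(\xi,t)\Big]$.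 *)

theory Defs
  imports "HOL-Analysis.Analysis"
begin

text \<open>The entire function cos(t sqrt z) of z, as a power series.\<close>
definition cosE :: "real \<Rightarrow> real \<Rightarrow> real" where
  "cosE t z = (\<Sum>m. (-1)^m * t^(2*m) * z^m / fact (2*m))"

text \<open>The entire function sin(t sqrt z)/sqrt z of z, as a power series.\<close>
definition sincE :: "real \<Rightarrow> real \<Rightarrow> real" where
  "sincE t z = (\<Sum>m. (-1)^m * t^(2*m+1) * z^m / fact (2*m+1))"

definition fF :: "real \<Rightarrow> real \<Rightarrow> real \<Rightarrow> real" where
  "fF r c t = cosE t (r^2 - c)"

definition hH :: "real \<Rightarrow> real \<Rightarrow> real \<Rightarrow> real" where
  "hH r a t = 1 / sqrt (1 - 4*a*r^2) * exp (- (2*t*r^2) / (1 + sqrt (1 - 4*a*r^2)))"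

definition W2 :: "nat \<Rightarrow> 'a::real_normed_vector \<Rightarrow> real \<Rightarrow> real" where
  "W2 b \<xi> t = (if b \<ge> 2 then 2 / t * (\<Sum>k=0..b-2. (1/4)^k / fact k *
        (deriv ^^ (k+1)) (\<lambda>c. fF (norm \<xi>) c t) 0) else 0)"

definition D2 :: "nat \<Rightarrow> 'a::real_normed_vector \<Rightarrow> real \<Rightarrow> real" where
  "D2 l \<xi> t = (\<Sum>k<l. 1 / fact k * (deriv ^^ k) (\<lambda>a. hH (norm \<xi>) a t) 0)"

definition m2 :: "(real \<Rightarrow> real) \<Rightarrow> nat \<Rightarrow> nat \<Rightarrow> 'a::real_normed_vector \<Rightarrow> real \<Rightarrow> real" where
  "m2 chiH b l \<xi> t = chiH (norm \<xi>) *
     (exp (-t/2) * sincE t ((norm \<xi>)^2 - 1/4) - exp (-t/2) * W2 b \<xi> t - D2 l \<xi> t)"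

end

theory Submission
  imports Defs "HOL-Complex_Analysis.Complex_Analysis"
begin


definition sc :: "real \<Rightarrow> nat \<Rightarrow> real" where
  "sc t n = (-1)^n * t^(2*n+1) / fact (2*n+1)"
definition cc :: "real \<Rightarrow> nat \<Rightarrow> real" where
  "cc t n = (-1)^n * t^(2*n) / fact (2*n)"

lemma summable_sc: "summable (\<lambda>n. of_real (sc t n) * (w::'a::{real_normed_field,banach})^n)"
proof (rule summable_comparison_test[where g="\<lambda>n. \<bar>t\<bar> * (inverse (fact n) * (t^2 * norm w)^n)"])
  show "summable (\<lambda>n. \<bar>t\<bar> * (inverse (fact n) * (t^2 * norm w)^n))"
    by (intro summable_mult summable_exp)
  show "\<exists>N. \<forall>n\<ge>N. norm (of_real (sc t n) * w ^ n) \<le> \<bar>t\<bar> * (inverse (fact n) * (t\<^sup>2 * norm w) ^ n)"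
  proof (intro exI allI impI)
    fix n :: nat
    have f: "fact n \<le> (fact (2*n+1) :: real)" by (intro fact_mono) auto
    have "norm (of_real (sc t n) * w ^ n) = \<bar>t\<bar>^(2*n+1) * norm w ^ n / fact (2*n+1)"
      by (simp only: norm_mult norm_of_real norm_power) (simp add: sc_def abs_mult power_abs)
    also have "\<dots> \<le> \<bar>t\<bar>^(2*n+1) * norm w ^ n / fact n"
      by (intro divide_left_mono f) auto
    also have "\<dots> = \<bar>t\<bar> * (inverse (fact n) * (t\<^sup>2 * norm w) ^ n)"
    proof -
      have e: "\<bar>t\<bar>^(2*n) = (t^2)^n" by (simp add: power_mult power2_abs)
      have e2: "\<bar>t\<bar>^(n*2) = (t^2)^n" by (metis e mult.commute)
      show ?thesis by (simp add: e e2 power_mult_distrib field_simps)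
    qed
    finally show "norm (of_real (sc t n) * w ^ n) \<le> \<bar>t\<bar> * (inverse (fact n) * (t\<^sup>2 * norm w) ^ n)" .
  qed
qed

lemma summable_cc: "summable (\<lambda>n. of_real (cc t n) * (w::'a::{real_normed_field,banach})^n)"
proof (rule summable_comparison_test[where g="\<lambda>n. (inverse (fact n) * (t^2 * norm w)^n)"])
  show "summable (\<lambda>n. (inverse (fact n) * (t^2 * norm w)^n))"
    by (intro summable_mult summable_exp)
  show "\<exists>N. \<forall>n\<ge>N. norm (of_real (cc t n) * w ^ n) \<le> (inverse (fact n) * (t\<^sup>2 * norm w) ^ n)"
  proof (intro exI allI impI)
    fix n :: nat
    have f: "fact n \<le> (fact (2*n) :: real)" by (intro fact_mono) auto
    have "norm (of_real (cc t n) * w ^ n) = \<bar>t\<bar>^(2*n) * norm w ^ n / fact (2*n)"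
      by (simp only: norm_mult norm_of_real norm_power) (simp add: cc_def abs_mult power_abs)
    also have "\<dots> \<le> \<bar>t\<bar>^(2*n) * norm w ^ n / fact n"
      by (intro divide_left_mono f) auto
    also have "\<dots> = (inverse (fact n) * (t\<^sup>2 * norm w) ^ n)"
    proof -
      have e: "\<bar>t\<bar>^(2*n) = (t^2)^n" by (simp add: power_mult power2_abs)
      have e2: "\<bar>t\<bar>^(n*2) = (t^2)^n" by (metis e mult.commute)
      show ?thesis by (simp add: e e2 power_mult_distrib field_simps)
    qed
    finally show "norm (of_real (cc t n) * w ^ n) \<le> (inverse (fact n) * (t\<^sup>2 * norm w) ^ n)" .
  qed
qed

lemma real_DERIV_Re:
  assumes "G holomorphic_on S" "open S" "complex_of_real x \<in> S"
  shows "((\<lambda>y. Re (G (of_real y))) has_real_derivative Re (deriv G (of_real x))) (at x)"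
proof -
  have d1: "((\<lambda>y::real. complex_of_real y) has_vector_derivative 1) (at x)"
    using has_vector_derivative_of_real[OF DERIV_ident[where F="at x"]] by simp
  have d2: "(G has_field_derivative deriv G (of_real x)) (at (of_real x))"
    using holomorphic_derivI[OF assms] by simp
  have "((G \<circ> complex_of_real) has_vector_derivative (1 * deriv G (of_real x))) (at x)"
    by (rule field_vector_diff_chain_at[OF d1 d2])
  then have "((\<lambda>y. Re ((G \<circ> complex_of_real) y)) has_vector_derivative Re (1 * deriv G (of_real x))) (at x)"
    by (rule bounded_linear.has_vector_derivative[OF bounded_linear_Re])
  then show ?thesis
    by (simp add: has_real_derivative_iff_has_vector_derivative o_def)
qed

lemma real_deriv_transfer:
  fixes F :: "complex \<Rightarrow> complex" and f :: "real \<Rightarrow> real"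
  assumes F: "F holomorphic_on S" and S: "open S" and U: "open U" and US: "complex_of_real ` U \<subseteq> S"
    and eq: "\<And>x. x \<in> U \<Longrightarrow> f x = Re (F (of_real x))"
  shows "x \<in> U \<Longrightarrow> (deriv ^^ k) f x = Re ((deriv ^^ k) F (of_real x))"
proof (induction k arbitrary: x)
  case 0 then show ?case using eq by simp
next
  case (Suc k)
  have hk: "(deriv ^^ k) F holomorphic_on S" using holomorphic_higher_deriv[OF F S] .
  have D: "((\<lambda>y. Re ((deriv ^^ k) F (of_real y))) has_real_derivative Re (deriv ((deriv ^^ k) F) (of_real x))) (at x)"
    using real_DERIV_Re[OF hk S] Suc.prems US by auto
  have D2: "((deriv ^^ k) f has_real_derivative Re (deriv ((deriv ^^ k) F) (of_real x))) (at x)"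
    by (rule has_field_derivative_transform_within_open[OF D U Suc.prems]) (use Suc.IH in auto)
  show ?case using DERIV_imp_deriv[OF D2] by simp
qed

definition Sc :: "real \<Rightarrow> complex \<Rightarrow> complex" where
  "Sc t w = (\<Sum>n. complex_of_real (sc t n) * w^n)"
definition Cc :: "real \<Rightarrow> complex \<Rightarrow> complex" where
  "Cc t w = (\<Sum>n. complex_of_real (cc t n) * w^n)"

lemma Sc_holo: "Sc t holomorphic_on S"
proof -
  have "\<And>w. (Sc t has_field_derivative (\<Sum>n. diffs (\<lambda>n. complex_of_real (sc t n)) n * w^n)) (at w)"
    unfolding Sc_def[abs_def] by (rule termdiffs_strong_converges_everywhere[OF summable_sc])
  then show ?thesis
    by (meson field_differentiable_at_within field_differentiable_def holomorphic_on_def)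
qed

lemma Cc_holo: "Cc t holomorphic_on S"
proof -
  have "\<And>w. (Cc t has_field_derivative (\<Sum>n. diffs (\<lambda>n. complex_of_real (cc t n)) n * w^n)) (at w)"
    unfolding Cc_def[abs_def] by (rule termdiffs_strong_converges_everywhere[OF summable_cc])
  then show ?thesis
    by (meson field_differentiable_at_within field_differentiable_def holomorphic_on_def)
qed

lemma aux_cc: "(F::real) > 0 \<Longrightarrow> real (Suc n) * ((-1)^(Suc n) * t^(2*n+2) / ((2 * real n + 2) * F)) = (- t / 2) * ((-1)^n * t^(2*n+1) / F)"
proof -
  assume F: "F > 0"
  have c: "\<And>m X Y::real. m > 0 \<Longrightarrow> m * (X / (m * Y)) = X / Y" by simp
  have e: "(2 * real n + 2) * F = real (Suc n) * (2 * F)" by (simp add: algebra_simps)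
  have "real (Suc n) * ((-1)^(Suc n) * t^(2*n+2) / ((2 * real n + 2) * F)) = ((-1)^(Suc n) * t^(2*n+2) / (2 * F))"
    unfolding e by (rule c) simp
  also have "\<dots> = (- t / 2) * ((-1)^n * t^(2*n+1) / F)"
    by (simp add: field_simps)
  finally show ?thesis .
qed

lemma diffs_cc: "diffs (\<lambda>n. complex_of_real (cc t n)) n = of_real (- t / 2) * of_real (sc t n)"
proof -
  have f: "fact (2*n+2) = (2 * real n + 2) * (fact (2*n+1) :: real)"
    using fact_Suc[of "2*n+1"] by simp
  have c1: "cc t (Suc n) = (-1)^(Suc n) * t^(2*n+2) / fact (2*n+2)"
    unfolding cc_def by (simp add: algebra_simps)
  have "real (Suc n) * cc t (Suc n) = real (Suc n) * ((-1)^(Suc n) * t^(2*n+2) / ((2 * real n + 2) * fact (2*n+1)))"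
    unfolding c1 f ..
  also have "\<dots> = (- t / 2) * ((-1)^n * t^(2*n+1) / fact (2*n+1))"
    by (rule aux_cc) simp
  finally have "real (Suc n) * cc t (Suc n) = (- t / 2) * sc t n"
    unfolding sc_def .
  then show ?thesis unfolding diffs_def
    by (metis of_real_mult of_real_of_nat_eq)
qed

lemma deriv_Cc: "deriv (Cc t) w = of_real (- t / 2) * Sc t w"
proof -
  have "(Cc t has_field_derivative (\<Sum>n. diffs (\<lambda>n. complex_of_real (cc t n)) n * w^n)) (at w)"
    unfolding Cc_def[abs_def] by (rule termdiffs_strong_converges_everywhere[OF summable_cc])
  then have "deriv (Cc t) w = (\<Sum>n. of_real (- t / 2) * (of_real (sc t n) * w^n))"
    using DERIV_imp_deriv by (simp add: diffs_cc mult.assoc)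
  also have "\<dots> = of_real (- t / 2) * Sc t w"
    unfolding Sc_def by (rule suminf_mult[OF summable_sc])
  finally show ?thesis .
qed

lemma sincE_Sc: "sincE t x = Re (Sc t (of_real x))"
proof -
  have e1: "(\<lambda>m. (-1)^m * t^(2*m+1) * x^m / fact (2*m+1)) = (\<lambda>n. sc t n * x^n)"
    by (simp add: sc_def)
  have e2: "(\<lambda>n. complex_of_real (sc t n) * (of_real x)^n) = (\<lambda>n. of_real (sc t n * x^n))"
    by simp
  have "complex_of_real (\<Sum>n. sc t n * x^n) = (\<Sum>n. complex_of_real (sc t n * x^n))"
  proof -
    have "summable (\<lambda>n. sc t n * x^n)" using summable_sc[of t x] by simp
    from suminf_of_real[OF this] show ?thesis by simp
  qed
  then have "Sc t (of_real x) = of_real (sincE t x)"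
    unfolding Sc_def sincE_def e1 e2 by simp
  then show ?thesis by simp
qed

lemma cosE_Cc: "cosE t x = Re (Cc t (of_real x))"
proof -
  have e1: "(\<lambda>m. (-1)^m * t^(2*m) * x^m / fact (2*m)) = (\<lambda>n. cc t n * x^n)"
    by (simp add: cc_def)
  have e2: "(\<lambda>n. complex_of_real (cc t n) * (of_real x)^n) = (\<lambda>n. of_real (cc t n * x^n))"
    by simp
  have "complex_of_real (\<Sum>n. cc t n * x^n) = (\<Sum>n. complex_of_real (cc t n * x^n))"
  proof -
    have "summable (\<lambda>n. cc t n * x^n)" using summable_cc[of t x] by simp
    from suminf_of_real[OF this] show ?thesis by simp
  qed
  then have "Cc t (of_real x) = of_real (cosE t x)"
    unfolding Cc_def cosE_def e1 e2 by simp
  then show ?thesis by simp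
qed



lemma norm_sin_le_exp_Im: "norm (sin (z::complex)) \<le> exp \<bar>Im z\<bar>"
proof -
  let ?y = "Im z"
  have a: "\<bar>Re (sin z)\<bar> \<le> (exp ?y + exp (- ?y)) / 2"
  proof -
    have p: "exp ?y + exp (- ?y) > 0" by (intro add_pos_pos) auto
    have "\<bar>Re (sin z)\<bar> = \<bar>sin (Re z)\<bar> * ((exp ?y + exp (- ?y)) / 2)"
      unfolding Re_sin using p by (simp add: abs_mult abs_divide)
    also have "\<dots> \<le> 1 * ((exp ?y + exp (- ?y)) / 2)"
      using p by (intro mult_right_mono abs_sin_le_one) auto
    finally show ?thesis by simp
  qed
  have b: "\<bar>Im (sin z)\<bar> \<le> \<bar>exp ?y - exp (- ?y)\<bar> / 2"
  proof -
    have "\<bar>Im (sin z)\<bar> = \<bar>cos (Re z)\<bar> * (\<bar>exp ?y - exp (- ?y)\<bar> / 2)"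
      unfolding Im_sin by (simp add: abs_mult abs_divide)
    also have "\<dots> \<le> 1 * (\<bar>exp ?y - exp (- ?y)\<bar> / 2)"
      by (intro mult_right_mono abs_cos_le_one) auto
    finally show ?thesis by simp
  qed
  have c: "(exp ?y + exp (- ?y)) / 2 + \<bar>exp ?y - exp (- ?y)\<bar> / 2 = exp \<bar>?y\<bar>"
  proof (cases "?y \<ge> 0")
    case True
    then have "exp (- ?y) \<le> exp ?y" by simp
    then show ?thesis using True by (simp add: field_simps)
  next
    case False
    then have "exp ?y \<le> exp (- ?y)" by simp
    then show ?thesis using False by (simp add: field_simps)
  qed
  show ?thesis using cmod_le[of "sin z"] a b c by linarith
qed

lemma Sc_sin:
  assumes "v \<noteq> 0"
  shows "Sc t (v^2) * v = sin (complex_of_real t * v)"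
proof -
  let ?z = "complex_of_real t * v"
  let ?f = "\<lambda>n. sin_coeff n *\<^sub>R ?z^n"
  have sm: "strict_mono (\<lambda>n::nat. 2*n+1)" by (rule strict_monoI) simp
  have zero: "\<And>n. n \<notin> range (\<lambda>n::nat. 2*n+1) \<Longrightarrow> ?f n = 0"
  proof -
    fix n :: nat assume "n \<notin> range (\<lambda>n::nat. 2*n+1)"
    then have "even n"
      by (metis oddE rangeI)
    then show "?f n = 0" by (simp add: sin_coeff_def)
  qed
  have "?f sums sin ?z" by (rule sin_converges)
  then have s1: "(\<lambda>n. ?f (2*n+1)) sums sin ?z"
    using sums_mono_reindex[of "\<lambda>n. 2*n+1" ?f, OF sm zero] by blast
  have e: "?f (2*n+1) = complex_of_real (sc t n) * (v^2)^n * v" for n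
  proof -
    have c1: "sin_coeff (2*n+1) = (-1)^n / fact (2*n+1)" by (simp add: sin_coeff_def)
    have c2: "v^(2*n+1) = (v^2)^n * v" by (simp only: power_add power_mult power_one_right)
    have c3: "complex_of_real (sc t n) = complex_of_real ((-1)^n / fact (2*n+1)) * complex_of_real t^(2*n+1)"
      unfolding sc_def by simp
    have "?f (2*n+1) = complex_of_real ((-1)^n / fact (2*n+1)) * (complex_of_real t^(2*n+1) * v^(2*n+1))"
      by (simp only: c1 scaleR_conv_of_real power_mult_distrib)
    also have "\<dots> = complex_of_real (sc t n) * (v^2)^n * v"
      unfolding c3 c2 by (simp only: mult.assoc)
    finally show ?thesis .
  qed
  have s2: "(\<lambda>n. complex_of_real (sc t n) * (v^2)^n * v) sums (Sc t (v^2) * v)"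
    unfolding Sc_def by (intro sums_mult2 summable_sums summable_sc)
  have s1': "(\<lambda>n. complex_of_real (sc t n) * (v^2)^n * v) sums sin ?z" using s1 by (simp only: e)
  show ?thesis using sums_unique2[OF s2 s1'] .
qed

lemma Sc_circle_bound:
  assumes t: "t \<ge> 1" and s: "s \<ge> 1/2" and w: "norm (complex_of_real (s^2) - w) = s / (4*t)"
  shows "norm (Sc t w) \<le> 6 / s"
proof -
  define \<rho> where "\<rho> = s / (4*t)"
  have s0: "s > 0" using s by simp
  have \<rho>0: "\<rho> > 0" unfolding \<rho>_def using s0 t by simp
  have \<rho>le: "\<rho> \<le> s^2/2"
  proof -
    have "\<rho> \<le> s / 4" unfolding \<rho>_def using s0 t by (simp add: field_simps)
    also have "\<dots> \<le> s^2/2" using s by (simp add: power2_eq_square field_simps)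
    finally show ?thesis .
  qed
  have nw: "norm (w - of_real (s^2)) = \<rho>" using w unfolding \<rho>_def by (simp add: norm_minus_commute)
  have reW: "Re w \<ge> s^2/2"
  proof -
    have "\<bar>Re (w - of_real (s^2))\<bar> \<le> \<rho>" using abs_Re_le_cmod nw by metis
    then show ?thesis using \<rho>le by simp
  qed
  have imW: "\<bar>Im w\<bar> \<le> \<rho>"
  proof -
    have "\<bar>Im (w - of_real (s^2))\<bar> \<le> \<rho>" using abs_Im_le_cmod nw by metis
    then show ?thesis by simp
  qed
  define v where "v = csqrt w"
  have vv: "v^2 = w" unfolding v_def by simp
  have rv0: "Re v \<ge> 0" unfolding v_def by (rule Re_csqrt)
  have "(Re v)^2 - (Im v)^2 = Re w" using Re_power2[of v] vv by simp
  then have "(Re v)^2 \<ge> s^2/2" using reW by (smt (verit) zero_le_power2)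
  moreover have "(s/2)^2 \<le> s^2/2" by (simp add: power2_eq_square)
  ultimately have "(Re v)^2 \<ge> (s/2)^2" by linarith
  then have rv: "Re v \<ge> s/2" using rv0 by (rule power2_le_imp_le)
  have "2 * Re v * Im v = Im w" using Im_power2[of v] vv by simp
  then have "\<bar>Im w\<bar> = \<bar>2 * Re v * Im v\<bar>" by simp
  also have "\<dots> = 2 * Re v * \<bar>Im v\<bar>" by (simp only: abs_mult abs_of_nonneg[OF rv0] abs_numeral)
  finally have "\<bar>Im w\<bar> = 2 * Re v * \<bar>Im v\<bar>" .
  then have "2 * Re v * \<bar>Im v\<bar> \<le> \<rho>" using imW by linarith
  moreover have "s * \<bar>Im v\<bar> \<le> 2 * Re v * \<bar>Im v\<bar>" using rv by (intro mult_right_mono) auto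
  ultimately have "s * \<bar>Im v\<bar> \<le> \<rho>" by linarith
  then have imv: "\<bar>Im v\<bar> \<le> 1 / (4*t)" using s0 t unfolding \<rho>_def by (simp add: field_simps)
  have "\<bar>Im (complex_of_real t * v)\<bar> = t * \<bar>Im v\<bar>" using t by (simp add: abs_mult)
  also have "\<dots> \<le> t * (1/(4*t))" using imv t by (intro mult_left_mono) auto
  also have "\<dots> = 1/4" using t by simp
  finally have "\<bar>Im (complex_of_real t * v)\<bar> \<le> 1/4" .
  then have "exp \<bar>Im (complex_of_real t * v)\<bar> \<le> exp (1/4)" by simp
  then have "norm (sin (complex_of_real t * v)) \<le> exp (1/4)"
    using norm_sin_le_exp_Im[of "complex_of_real t * v"] by linarith
  also have "exp (1/4::real) \<le> 3"
  proof -
    have "exp (1/4::real) \<le> exp 1" by simp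
    also have "exp (1::real) \<le> 3" using exp_le by simp
    finally show ?thesis .
  qed
  finally have sn: "norm (sin (complex_of_real t * v)) \<le> 3" .
  have nv: "norm v \<ge> s/2" using rv abs_Re_le_cmod[of v] by linarith
  have v0: "v \<noteq> 0" using nv s0 by auto
  have "Sc t w = sin (complex_of_real t * v) / v" using Sc_sin[OF v0, of t] vv v0 by (simp add: field_simps)
  then have "norm (Sc t w) = norm (sin (complex_of_real t * v)) / norm v" by (simp add: norm_divide)
  also have "\<dots> \<le> 3 / (s/2)"
    using sn nv s0 by (intro frac_le) auto
  also have "\<dots> = 6 / s" by simp
  finally show ?thesis .
qed



lemma Sc_deriv_bound:
  assumes t: "t \<ge> 1" and s: "s \<ge> 1/2"
  shows "norm ((deriv ^^ j) (Sc t) (complex_of_real (s^2))) \<le> fact j * (6/s) / (s/(4*t))^j"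
proof (rule Cauchy_inequality)
  show "Sc t holomorphic_on ball (complex_of_real (s^2)) (s/(4*t))" by (rule Sc_holo)
  show "continuous_on (cball (complex_of_real (s^2)) (s/(4*t))) (Sc t)"
    by (rule holomorphic_on_imp_continuous_on[OF Sc_holo])
  show "0 < s/(4*t)" using s t by simp
  show "\<And>x. norm (complex_of_real (s^2) - x) = s/(4*t) \<Longrightarrow> norm (Sc t x) \<le> 6/s"
    using Sc_circle_bound[OF t s] by blast
qed

lemma sincE_deriv: "(deriv ^^ j) (sincE t) x = Re ((deriv ^^ j) (Sc t) (complex_of_real x))"
  by (rule real_deriv_transfer[OF Sc_holo[of t UNIV] open_UNIV open_UNIV]) (auto simp: sincE_Sc)

lemma sincE_DERIV: "((deriv ^^ j) (sincE t) has_real_derivative (deriv ^^ Suc j) (sincE t) x) (at x)"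
proof -
  have e: "(deriv ^^ j) (sincE t) = (\<lambda>y. Re ((deriv ^^ j) (Sc t) (complex_of_real y)))"
    by (rule ext) (rule sincE_deriv)
  have h: "(deriv ^^ j) (Sc t) holomorphic_on UNIV" by (rule holomorphic_higher_deriv[OF Sc_holo]) simp
  have "((\<lambda>y. Re ((deriv ^^ j) (Sc t) (complex_of_real y))) has_real_derivative
          Re (deriv ((deriv ^^ j) (Sc t)) (complex_of_real x))) (at x)"
    by (rule real_DERIV_Re[OF h]) auto
  moreover have "Re (deriv ((deriv ^^ j) (Sc t)) (complex_of_real x)) = (deriv ^^ Suc j) (sincE t) x"
    using sincE_deriv[of "Suc j" t x] by simp
  ultimately show ?thesis unfolding e by simp
qed

lemma fF_deriv:
  assumes "t > 0"
  shows "(deriv ^^ Suc k) (\<lambda>c. fF r c t) 0 = (-1)^k * (t/2) * (deriv ^^ k) (sincE t) (r^2)"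
proof -
  define G where "G = (\<lambda>w. Cc t ((-1) * w + complex_of_real (r^2)))"
  have Gh: "G holomorphic_on UNIV" unfolding G_def
    by (rule holomorphic_on_compose_gen[OF _ Cc_holo, unfolded o_def]) (auto intro!: holomorphic_intros)
  have h0: "(deriv ^^ Suc k) (\<lambda>c. fF r c t) 0 = Re ((deriv ^^ Suc k) G (complex_of_real 0))"
    by (rule real_deriv_transfer[OF Gh open_UNIV open_UNIV]) (auto simp: G_def fF_def cosE_Cc)
  have "(deriv ^^ Suc k) (\<lambda>c. fF r c t) 0 = Re ((deriv ^^ Suc k) G 0)"
    using h0 by simp
  also have "(deriv ^^ Suc k) G 0 = (-1)^(Suc k) * (deriv ^^ Suc k) (Cc t) (complex_of_real (r^2))"
    unfolding G_def
    by (subst higher_deriv_compose_linear'[OF Cc_holo[of t UNIV] open_UNIV open_UNIV]) auto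
  also have "(deriv ^^ Suc k) (Cc t) = (deriv ^^ k) (\<lambda>w. complex_of_real (-t/2) * Sc t w)"
    by (simp add: funpow_Suc_right deriv_Cc[abs_def] del: funpow.simps)
  also have "(deriv ^^ k) (\<lambda>w. complex_of_real (-t/2) * Sc t w) (complex_of_real (r^2)) =
      complex_of_real (-t/2) * (deriv ^^ k) (Sc t) (complex_of_real (r^2))"
    by (rule higher_deriv_cmult[OF Sc_holo[of t UNIV]]) auto
  finally have "(deriv ^^ Suc k) (\<lambda>c. fF r c t) 0 =
     Re ((-1)^(Suc k) * (complex_of_real (-t/2) * (deriv ^^ k) (Sc t) (complex_of_real (r^2))))"
    by simp
  also have "\<dots> = (-1)^k * (t/2) * Re ((deriv ^^ k) (Sc t) (complex_of_real (r^2)))"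
  proof -
    have "(-1::complex)^(Suc k) * (complex_of_real (-t/2) * (deriv ^^ k) (Sc t) (complex_of_real (r^2)))
       = complex_of_real ((-1)^k * (t/2)) * (deriv ^^ k) (Sc t) (complex_of_real (r^2))"
      by simp
    then show ?thesis by simp
  qed
  finally show ?thesis by (simp add: sincE_deriv)
qed

lemma W2_formula:
  assumes "t > 0" "b \<ge> 2"
  shows "W2 b \<xi> t = (\<Sum>k<b-1. (deriv ^^ k) (sincE t) (norm \<xi>^2) / fact k * (-1/4)^k)"
proof -
  have "W2 b \<xi> t = 2 / t * (\<Sum>k<b-1. (1/4)^k / fact k * ((-1)^k * (t/2) * (deriv ^^ k) (sincE t) (norm \<xi>^2)))"
  proof -
    have "{0..b-2} = {..<b-1}" using assms(2) by auto
    then show ?thesis unfolding W2_def if_P[OF assms(2)] Suc_eq_plus1[symmetric] fF_deriv[OF assms(1)]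
      by simp
  qed
  also have "\<dots> = (\<Sum>k<b-1. 2 / t * ((1/4)^k / fact k * ((-1)^k * (t/2) * (deriv ^^ k) (sincE t) (norm \<xi>^2))))"
    by (rule sum_distrib_left)
  also have "\<dots> = (\<Sum>k<b-1. (deriv ^^ k) (sincE t) (norm \<xi>^2) / fact k * (-1/4)^k)"
  proof (rule sum.cong[OF refl])
    fix k
    have "(-1/4::real)^k = (-1)^k * (1/4)^k" by (metis mult_minus1 power_mult_distrib times_divide_eq_right mult_1)
    then show "2 / t * ((1/4)^k / fact k * ((-1)^k * (t/2) * (deriv ^^ k) (sincE t) (norm \<xi>^2))) =
         (deriv ^^ k) (sincE t) (norm \<xi>^2) / fact k * (-1/4)^k"
      using assms(1) by (simp add: field_simps)
  qed
  finally show ?thesis .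
qed



lemma remainder_repr:
  assumes t: "t > 0" and b: "b \<ge> 1"
  obtains \<tau> where "norm \<xi>^2 - 1/4 \<le> \<tau>" "\<tau> \<le> norm \<xi>^2"
    "sincE t (norm \<xi>^2 - 1/4) - W2 b \<xi> t = (deriv ^^ (b-1)) (sincE t) \<tau> * (-1/4)^(b-1) / fact (b-1)"
proof (cases "b \<ge> 2")
  case False
  then have "b = 1" using b by simp
  then show ?thesis using that[of "norm \<xi>^2 - 1/4"] by (simp add: W2_def)
next
  case True
  define P where "P = (\<lambda>m. (deriv ^^ m) (sincE t))"
  have "\<exists>\<tau>. norm \<xi>^2 - 1/4 < \<tau> \<and> \<tau> < norm \<xi>^2 \<and>
    sincE t (norm \<xi>^2 - 1/4) = (\<Sum>m<b-1. (P m (norm \<xi>^2) / fact m) * ((norm \<xi>^2 - 1/4) - norm \<xi>^2)^m)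
       + (P (b-1) \<tau> / fact (b-1)) * ((norm \<xi>^2 - 1/4) - norm \<xi>^2)^(b-1)"
  proof (rule Taylor_down)
    show "0 < b - 1" using True by simp
    show "P 0 = sincE t" unfolding P_def by simp
    show "\<forall>m u. m < b - 1 \<and> norm \<xi>^2 - 1/4 \<le> u \<and> u \<le> norm \<xi>^2 \<longrightarrow> DERIV (P m) u :> P (Suc m) u"
      unfolding P_def using sincE_DERIV by blast
  qed auto
  then obtain \<tau> where tau: "norm \<xi>^2 - 1/4 < \<tau>" "\<tau> < norm \<xi>^2"
    "sincE t (norm \<xi>^2 - 1/4) = (\<Sum>m<b-1. (P m (norm \<xi>^2) / fact m) * (-1/4)^m)
       + (P (b-1) \<tau> / fact (b-1)) * (-1/4)^(b-1)" by auto
  have "W2 b \<xi> t = (\<Sum>m<b-1. (P m (norm \<xi>^2) / fact m) * (-1/4)^m)"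
    unfolding W2_formula[OF t True] P_def ..
  then show ?thesis using that[of \<tau>] tau unfolding P_def by simp
qed

lemma main_bound:
  assumes t: "t \<ge> 1" and b: "b \<ge> 1" and r: "norm \<xi> \<ge> 1"
  shows "\<bar>sincE t (norm \<xi>^2 - 1/4) - W2 b \<xi> t\<bar> \<le> 6 * 2^b * t^(b-1) / norm \<xi> ^ b"
proof -
  let ?r = "norm \<xi>"
  obtain \<tau> where tau: "?r^2 - 1/4 \<le> \<tau>" "\<tau> \<le> ?r^2"
    "sincE t (?r^2 - 1/4) - W2 b \<xi> t = (deriv ^^ (b-1)) (sincE t) \<tau> * (-1/4)^(b-1) / fact (b-1)"
    using remainder_repr[of t b \<xi>] t b by auto
  define n where "n = b - 1"
  have bn: "b = Suc n" using b unfolding n_def by simp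
  have r2: "?r^2 \<ge> 1" using r by (simp add: one_le_power)
  have tau4: "\<tau> \<ge> (?r/2)^2" using tau(1) r2 by (simp add: power_divide)
  define s where "s = sqrt \<tau>"
  have tau0: "\<tau> \<ge> 0" using tau4 by (smt (verit) zero_le_power2)
  have ss: "s^2 = \<tau>" unfolding s_def using tau0 by simp
  have sr: "s \<ge> ?r/2" unfolding s_def using tau4 r
    by (metis norm_ge_zero real_sqrt_abs real_sqrt_le_mono abs_of_nonneg divide_nonneg_nonneg zero_le_numeral)
  have s12: "s \<ge> 1/2" using sr r by linarith
  have s0: "s > 0" using s12 by simp
  have "\<bar>(deriv ^^ n) (sincE t) \<tau>\<bar> = \<bar>Re ((deriv ^^ n) (Sc t) (complex_of_real (s^2)))\<bar>"
    by (simp add: sincE_deriv ss)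
  also have "\<dots> \<le> norm ((deriv ^^ n) (Sc t) (complex_of_real (s^2)))" by (rule abs_Re_le_cmod)
  also have "\<dots> \<le> fact n * (6/s) / (s/(4*t))^n" by (rule Sc_deriv_bound[OF t s12])
  finally have P: "\<bar>(deriv ^^ n) (sincE t) \<tau>\<bar> \<le> fact n * (6/s) / (s/(4*t))^n" .
  have "\<bar>sincE t (?r^2 - 1/4) - W2 b \<xi> t\<bar> = \<bar>(deriv ^^ n) (sincE t) \<tau>\<bar> * (1/4)^n / fact n"
    unfolding tau(3) n_def[symmetric] by (simp add: abs_mult abs_divide power_abs)
  also have "\<dots> \<le> (fact n * (6/s) / (s/(4*t))^n) * (1/4)^n / fact n"
    by (intro divide_right_mono mult_right_mono P) auto
  also have "\<dots> = 6 * t^n / s^(Suc n)"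
    using s0 t by (simp add: field_simps power_divide power_mult_distrib)
  also have "\<dots> \<le> 6 * t^n / (?r/2)^(Suc n)"
    using sr r t by (intro divide_left_mono power_mono mult_pos_pos zero_less_power) auto
  also have "\<dots> = 6 * 2^b * t^(b-1) / ?r^b"
    unfolding bn by (simp add: power_divide field_simps)
  finally show ?thesis .
qed



definition hc :: "real \<Rightarrow> real \<Rightarrow> complex \<Rightarrow> complex" where
  "hc r t a = 1 / csqrt (1 - 4*a*complex_of_real (r^2)) *
     exp (- (2*complex_of_real t*complex_of_real (r^2)) / (1 + csqrt (1 - 4*a*complex_of_real (r^2))))"

lemma goodz:
  assumes "norm (z - 1) < 1"
  shows "z \<notin> \<real>\<^sub>\<le>\<^sub>0" "csqrt z \<noteq> 0" "1 + csqrt z \<noteq> 0"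
proof -
  have "\<bar>Re (z - 1)\<bar> < 1" using abs_Re_le_cmod[of "z - 1"] assms by linarith
  then have rz: "Re z > 0" by simp
  then show "z \<notin> \<real>\<^sub>\<le>\<^sub>0" by (auto simp: complex_nonpos_Reals_iff)
  show "csqrt z \<noteq> 0" using rz by auto
  have r1: "Re (1 + csqrt z) \<ge> 1" using Re_csqrt[of z] by simp
  show "1 + csqrt z \<noteq> 0"
  proof
    assume "1 + csqrt z = 0"
    then have "Re (1 + csqrt z) = 0" by simp
    with r1 show False by linarith
  qed
qed

lemma normz: "norm ((1 - 4*a*complex_of_real (r^2)) - 1) = 4 * r^2 * norm a"
  by (simp add: norm_mult norm_power)

lemma hc_holo:
  assumes "r > 0"
  shows "hc r t holomorphic_on ball 0 (1/(4*r^2))"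
proof -
  have g: "norm ((1 - 4*a*complex_of_real (r^2)) - 1) < 1" if "a \<in> ball 0 (1/(4*r^2))" for a
  proof -
    have "norm a < 1/(4*r^2)" using that by simp
    then have "4 * r^2 * norm a < 1" using assms by (simp add: field_simps)
    then show ?thesis by (simp only: normz)
  qed
  have H: "\<And>a. a \<in> ball 0 (1/(4*r^2)) \<Longrightarrow> (1 - 4*a*complex_of_real (r^2)) \<notin> \<real>\<^sub>\<le>\<^sub>0 \<and>
     csqrt (1 - 4*a*complex_of_real (r^2)) \<noteq> 0 \<and> 1 + csqrt (1 - 4*a*complex_of_real (r^2)) \<noteq> 0"
    using goodz g by blast
  show ?thesis unfolding hc_def[abs_def]
    by (intro holomorphic_intros) (use H in blast)+
qed

lemma hc_cont:
  "continuous_on {p. 4 * (fst p)^2 * norm (snd p) < 1} (\<lambda>p. hc (fst p) t (snd p))"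
proof -
  have g: "norm ((1 - 4 * snd p * complex_of_real ((fst p)^2)) - 1) < 1" if "p \<in> {p. 4 * (fst p)^2 * norm (snd p) < 1}" for p :: "real \<times> complex"
    using that by (simp only: normz) simp
  have H: "\<And>p. p \<in> {p. 4 * (fst p)^2 * norm (snd p) < 1} \<Longrightarrow> (1 - 4 * snd p * complex_of_real ((fst p)^2)) \<notin> \<real>\<^sub>\<le>\<^sub>0 \<and>
     csqrt (1 - 4 * snd p * complex_of_real ((fst p)^2)) \<noteq> 0 \<and> 1 + csqrt (1 - 4 * snd p * complex_of_real ((fst p)^2)) \<noteq> 0"
    using goodz g by blast
  have c: "continuous_on {p. 4 * (fst p)^2 * norm (snd p) < 1} (\<lambda>p::real\<times>complex. csqrt (1 - 4 * snd p * complex_of_real ((fst p)^2)))"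
  proof (rule continuous_on_compose2[OF continuous_on_csqrt])
    show "continuous_on {p. 4 * (fst p)^2 * norm (snd p) < 1} (\<lambda>p::real\<times>complex. 1 - 4 * snd p * complex_of_real ((fst p)^2))"
      by (intro continuous_intros)
    show "(\<lambda>p::real\<times>complex. 1 - 4 * snd p * complex_of_real ((fst p)^2)) ` {p. 4 * (fst p)^2 * norm (snd p) < 1} \<subseteq> - \<real>\<^sub>\<le>\<^sub>0"
      using H by blast
  qed
  show ?thesis unfolding hc_def
    by (intro continuous_intros c) (use H in blast)+
qed

lemma hc_real:
  assumes "4 * r^2 * \<bar>x\<bar> < 1"
  shows "hc r t (complex_of_real x) = complex_of_real (hH r x t)"
proof -
  have "x * (4*r^2) \<le> \<bar>x\<bar> * (4*r^2)" by (intro mult_right_mono) auto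
  then have p: "1 - 4*x*r^2 \<ge> 0" using assms by (simp add: algebra_simps)
  have e: "1 - 4*complex_of_real x*complex_of_real (r^2) = complex_of_real (1 - 4*x*r^2)" by simp
  show ?thesis unfolding hc_def hH_def e csqrt_of_real[OF p]
    by (simp add: exp_of_real[symmetric])
qed

lemma hc_circle_bound:
  assumes r: "r > 0" and t: "t \<ge> 0" and a: "norm a = 1/(8*r^2)"
  shows "norm (hc r t a) \<le> 2 * exp (-(4/5)*t*r^2)"
proof -
  define z where "z = 1 - 4*a*complex_of_real (r^2)"
  have nz1: "norm (z - 1) = 1/2" unfolding z_def normz a using r by simp
  define v where "v = csqrt z"
  have vv: "v^2 = z" unfolding v_def by simp
  have rv: "Re v \<ge> 0" unfolding v_def by (rule Re_csqrt)
  have "norm z \<ge> 1/2" using norm_triangle_ineq2[of 1 "1 - z"] nz1 by (simp add: norm_minus_commute)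
  moreover have "norm v ^ 2 = norm z" using vv by (metis norm_power)
  ultimately have "norm v ^ 2 \<ge> (1/2)^2" by (simp add: power2_eq_square)
  then have nv: "norm v \<ge> 1/2" by (rule power2_le_imp_le) simp
  have "norm (v - 1) * norm (v + 1) = 1/2"
  proof -
    have "(v - 1) * (v + 1) = z - 1" using vv by (simp add: power2_eq_square algebra_simps)
    then show ?thesis using nz1 by (metis norm_mult)
  qed
  moreover have "norm (v + 1) \<ge> 1" using abs_Re_le_cmod[of "v+1"] rv by simp
  moreover have "norm (v - 1) * 1 \<le> norm (v - 1) * norm (v + 1)"
    using calculation(2) by (intro mult_left_mono) auto
  ultimately have e1: "norm (v - 1) \<le> 1/2" by linarith
  define e where "e = v - 1"
  define u where "u = 1 + v"
  have ue: "u = 2 + e" unfolding u_def e_def by simp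
  have re: "Re e \<le> 1/2" using abs_Re_le_cmod[of e] e1 unfolding e_def by linarith
  have ee: "(Re e)^2 + (Im e)^2 \<le> 1/4"
  proof -
    have "(norm e)^2 \<le> (1/2)^2" using e1 unfolding e_def by (intro power_mono) auto
    moreover have "(1/2::real)^2 = 1/4" by (simp add: power2_eq_square)
    ultimately show ?thesis unfolding cmod_power2 by linarith
  qed
  have ru: "Re u = 2 + Re e" "Im u = Im e" unfolding ue by simp_all
  have nu: "(Re u)^2 + (Im u)^2 = 4 + 4 * Re e + ((Re e)^2 + (Im e)^2)"
    unfolding ru by (simp add: power2_eq_square algebra_simps)
  have rea: "\<bar>Re e\<bar> \<le> 1/2" using abs_Re_le_cmod[of e] e1 unfolding e_def by linarith
  then have "Re u > 0" unfolding ru by linarith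
  then have "(Re u)^2 > 0" by simp
  then have nu0: "(Re u)^2 + (Im u)^2 > 0" using zero_le_power2[of "Im u"] by linarith
  have aux: "2*(4+4*x+q) \<le> 5*(2+x)" if "x \<le> 1/2" "q \<le> 1/4" for x q :: real using that by (simp add: algebra_simps)
  have key: "5 * Re u \<ge> 2 * ((Re u)^2 + (Im u)^2)"
  proof -
    have "2 * ((Re u)^2 + (Im u)^2) = 2*(4+4*Re e + ((Re e)^2+(Im e)^2))" using nu by simp
    also have "\<dots> \<le> 5*(2+Re e)" by (rule aux[OF re ee])
    also have "\<dots> = 5 * Re u" using ru by simp
    finally show ?thesis .
  qed
  have "Re (1 / u) = Re u / ((Re u)^2 + (Im u)^2)" by (simp add: Re_divide)
  also have "\<dots> \<ge> 2/5" using key nu0 by (simp add: field_simps)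
  finally have r1u: "Re (1/u) \<ge> 2/5" .
  have W: "Re (- (2*complex_of_real t*complex_of_real (r^2)) / u) = - (2*t*r^2) * Re (1/u)"
  proof -
    have eq: "- (2*complex_of_real t*complex_of_real (r^2)) / u = complex_of_real (- (2*t*r^2)) * (1/u)" by simp
    have A: "Re (complex_of_real c * z) = c * Re z" for c z by simp
    show ?thesis unfolding eq by (rule A)
  qed
  have "- (2*t*r^2) * Re (1/u) \<le> - (2*t*r^2) * (2/5)"
    using r1u t by (intro mult_left_mono_neg) auto
  then have W2: "Re (- (2*complex_of_real t*complex_of_real (r^2)) / u) \<le> -(4/5)*t*r^2" unfolding W by simp
  have "hc r t a = 1 / v * exp (- (2*complex_of_real t*complex_of_real (r^2)) / u)"
    unfolding hc_def z_def[symmetric] v_def[symmetric] u_def ..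
  then have "norm (hc r t a) = (1 / norm v) * exp (Re (- (2*complex_of_real t*complex_of_real (r^2)) / u))"
    by (simp add: norm_mult norm_divide)
  also have "\<dots> \<le> 2 * exp (-(4/5)*t*r^2)"
  proof (rule mult_mono)
    have "norm v > 0" using nv by linarith
    then show "1 / norm v \<le> 2" using nv by (simp add: divide_le_eq)
  qed (use W2 in auto)
  finally show ?thesis .
qed

lemma hc_deriv_bound:
  assumes r: "r > 0" and t: "t \<ge> 0"
  shows "norm ((deriv ^^ k) (hc r t) 0) \<le> fact k * (2 * exp (-(4/5)*t*r^2)) / (1/(8*r^2))^k"
proof (rule Cauchy_inequality)
  have sub: "ball 0 (1/(8*r^2)) \<subseteq> ball (0::complex) (1/(4*r^2))" "cball 0 (1/(8*r^2)) \<subseteq> ball (0::complex) (1/(4*r^2))"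
    using r by (auto simp: field_simps)
  show "hc r t holomorphic_on ball 0 (1/(8*r^2))"
    by (rule holomorphic_on_subset[OF hc_holo[OF r] sub(1)])
  show "continuous_on (cball 0 (1/(8*r^2))) (hc r t)"
    by (rule continuous_on_subset[OF holomorphic_on_imp_continuous_on[OF hc_holo[OF r]] sub(2)])
  show "0 < 1/(8*r^2)" using r by simp
  show "\<And>x. norm (0 - x) = 1/(8*r^2) \<Longrightarrow> norm (hc r t x) \<le> 2 * exp (-(4/5)*t*r^2)"
    using hc_circle_bound[OF r t] by simp
qed

lemma hH_deriv:
  assumes r: "r > 0"
  shows "(deriv ^^ k) (\<lambda>a. hH r a t) 0 = Re ((deriv ^^ k) (hc r t) 0)"
proof -
  let ?U = "{-1/(4*r^2)<..<1/(4*r^2)}"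
  have "(deriv ^^ k) (\<lambda>a. hH r a t) 0 = Re ((deriv ^^ k) (hc r t) (complex_of_real 0))"
  proof (rule real_deriv_transfer[OF hc_holo[OF r] open_ball open_greaterThanLessThan])
    show "complex_of_real ` ?U \<subseteq> ball 0 (1/(4*r^2))" by auto
    show "0 \<in> ?U" using r by simp
    fix x assume "x \<in> ?U"
    then have "\<bar>x\<bar> < 1/(4*r^2)" by auto
    then have "4 * r^2 * \<bar>x\<bar> < 1" using r by (simp add: field_simps)
    then show "hH r x t = Re (hc r t (complex_of_real x))" by (simp add: hc_real)
  qed
  then show ?thesis by simp
qed



lemma hc_deriv_cont: "continuous_on {0<..} (\<lambda>r. (deriv ^^ k) (hc r t) 0)"
  unfolding continuous_on_iff
proof (intro ballI allI impI)
  fix r0 :: real and \<epsilon> :: real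
  assume r0: "r0 \<in> {0<..}" and e: "\<epsilon> > 0"
  then have r0p: "r0 > 0" by simp
  define R where "R = r0 + 1"
  define \<rho> where "\<rho> = 1/(8*R^2)"
  have R0: "R > 0" unfolding R_def using r0p by simp
  have \<rho>0: "\<rho> > 0" unfolding \<rho>_def using R0 by simp
  define K where "K = {r0/2..R} \<times> cball (0::complex) \<rho>"
  have Ksub: "K \<subseteq> {p. 4 * (fst p)^2 * norm (snd p) < 1}"
  proof
    fix p assume "p \<in> K"
    then have p1: "r0/2 \<le> fst p" "fst p \<le> R" and p2: "norm (snd p) \<le> \<rho>" unfolding K_def by auto
    have "(fst p)^2 \<le> R^2" using p1 r0p by (intro power_mono) auto
    then have "4 * (fst p)^2 * norm (snd p) \<le> 4 * R^2 * \<rho>"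
      using p2 by (intro mult_mono) auto
    also have "\<dots> = 1/2" unfolding \<rho>_def using R0 by simp
    finally show "p \<in> {p. 4 * (fst p)^2 * norm (snd p) < 1}" by simp
  qed
  have uc: "uniformly_continuous_on K (\<lambda>p. hc (fst p) t (snd p))"
    by (rule compact_uniformly_continuous[OF continuous_on_subset[OF hc_cont Ksub]])
       (unfold K_def, intro compact_Times compact_Icc compact_cball)
  define \<epsilon>' where "\<epsilon>' = \<epsilon> * \<rho>^k / (2 * fact k)"
  have e'0: "\<epsilon>' > 0" unfolding \<epsilon>'_def using e \<rho>0 by simp
  obtain d where d0: "d > 0" and
    dd: "\<And>x x'. x \<in> K \<Longrightarrow> x' \<in> K \<Longrightarrow> dist x' x < d \<Longrightarrow> dist (hc (fst x') t (snd x')) (hc (fst x) t (snd x)) < \<epsilon>'"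
    using uniformly_continuous_onE[OF uc e'0] by metis
  define \<delta> where "\<delta> = min d (min (r0/2) 1)"
  have \<delta>0: "\<delta> > 0" unfolding \<delta>_def using d0 r0p by simp
  show "\<exists>\<delta>>0. \<forall>r\<in>{0<..}. dist r r0 < \<delta> \<longrightarrow> dist ((deriv ^^ k) (hc r t) 0) ((deriv ^^ k) (hc r0 t) 0) < \<epsilon>"
  proof (intro exI[of _ \<delta>] conjI ballI impI \<delta>0)
    fix r :: real assume rp: "r \<in> {0<..}" and dr: "dist r r0 < \<delta>"
    have "\<bar>r - r0\<bar> < r0/2" "\<bar>r - r0\<bar> < 1" using dr unfolding \<delta>_def dist_real_def by auto
    then have rr: "r0/2 \<le> r" "r \<le> R" unfolding R_def abs_less_iff by linarith+
    have r0r: "r0/2 \<le> r0" "r0 \<le> R" using r0p unfolding R_def by auto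
    have rpos: "r > 0" using rp by simp
    have sub: "ball (0::complex) (2*\<rho>) \<subseteq> ball 0 (1/(4*x^2))" if "0 < x" "x \<le> R" for x
    proof -
      have "x^2 \<le> R^2" using that by (intro power_mono) auto
      then have "2*\<rho> \<le> 1/(4*x^2)" unfolding \<rho>_def using that R0 by (simp add: field_simps)
      then show ?thesis by auto
    qed
    have h1: "hc r t holomorphic_on ball 0 (2*\<rho>)"
      by (rule holomorphic_on_subset[OF hc_holo[OF rpos] sub[OF rpos rr(2)]])
    have h2: "hc r0 t holomorphic_on ball 0 (2*\<rho>)"
      by (rule holomorphic_on_subset[OF hc_holo[OF r0p] sub[OF r0p r0r(2)]])
    have hD: "(\<lambda>w. hc r t w - hc r0 t w) holomorphic_on ball 0 (2*\<rho>)"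
      using h1 h2 by (intro holomorphic_intros)
    have "norm ((deriv ^^ k) (\<lambda>w. hc r t w - hc r0 t w) 0) \<le> fact k * \<epsilon>' / \<rho>^k"
    proof (rule Cauchy_inequality)
      show "(\<lambda>w. hc r t w - hc r0 t w) holomorphic_on ball 0 \<rho>"
        by (rule holomorphic_on_subset[OF hD]) (use \<rho>0 in auto)
      show "continuous_on (cball 0 \<rho>) (\<lambda>w. hc r t w - hc r0 t w)"
        by (rule continuous_on_subset[OF holomorphic_on_imp_continuous_on[OF hD]]) (use \<rho>0 in auto)
      show "0 < \<rho>" by (rule \<rho>0)
      fix w :: complex assume "norm (0 - w) = \<rho>"
      then have wK: "(r, w) \<in> K" "(r0, w) \<in> K" unfolding K_def using rr r0r by auto
      have "dist (r, w) (r0, w) = dist r r0" by (simp add: dist_Pair_Pair)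
      also have "\<dots> < d" using dr unfolding \<delta>_def by simp
      finally have "dist (hc r t w) (hc r0 t w) < \<epsilon>'" using dd[OF wK(2) wK(1)] by simp
      then show "norm (hc r t w - hc r0 t w) \<le> \<epsilon>'" by (simp add: dist_norm)
    qed
    also have "\<dots> = \<epsilon> / 2" unfolding \<epsilon>'_def using \<rho>0 by simp
    also have "\<dots> < \<epsilon>" using e by simp
    finally have lt: "norm ((deriv ^^ k) (\<lambda>w. hc r t w - hc r0 t w) 0) < \<epsilon>" .
    have "(deriv ^^ k) (\<lambda>w. hc r t w - hc r0 t w) 0 = (deriv ^^ k) (hc r t) 0 - (deriv ^^ k) (hc r0 t) 0"
      by (rule higher_deriv_diff[OF h1 h2]) (use \<rho>0 in auto)
    then show "dist ((deriv ^^ k) (hc r t) 0) ((deriv ^^ k) (hc r0 t) 0) < \<epsilon>"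
      using lt by (simp add: dist_norm)
  qed
qed



lemma integrable_1d:
  fixes p :: real
  assumes p: "p > 1/2"
  shows "integrable lborel (\<lambda>x::real. (1 + x^2) powr (-p))"
proof -
  define e where "e = -2*p"
  have e1: "e < -1" unfolding e_def using p by simp
  define G where "G = (\<lambda>x::real. indicator {1..} x * x powr e)"
  have Gi: "integrable lborel G"
  proof -
    have "(\<lambda>x. x powr e) integrable_on {1..}"
      using has_integral_powr_to_inf[OF e1, of 1] by (auto simp: integrable_on_def)
    then have "(\<lambda>x. x powr e) absolutely_integrable_on {1..}"
      by (rule nonnegative_absolutely_integrable_1) simp
    then have "integrable lebesgue (\<lambda>x. indicator {1..} x *\<^sub>R x powr e)"
      unfolding set_integrable_def .
    then have "integrable lborel (\<lambda>x::real. indicator {1..} x *\<^sub>R x powr e)"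
      by (subst (asm) integrable_completion) (auto intro!: borel_measurable_continuous_on_indicator continuous_intros)
    then show ?thesis unfolding G_def by simp
  qed
  have Gi': "integrable lborel (\<lambda>x. G (0 + (-1) * x))"
    by (rule lborel_integrable_real_affine[OF Gi]) simp
  have Ii: "integrable lborel (\<lambda>x::real. (1::real) * indicator {-1..1} x)"
    by (rule borel_integrable_atLeastAtMost) simp
  define K where "K = (\<lambda>x. (1::real) * indicator {-1..1} x + G x + G (0 + (-1) * x))"
  have Ki: "integrable lborel K" unfolding K_def using Ii Gi Gi' by (intro Bochner_Integration.integrable_add)
  show ?thesis
  proof (rule Bochner_Integration.integrable_bound[OF Ki _ AE_I2])
    show "(\<lambda>x::real. (1 + x^2) powr (-p)) \<in> borel_measurable lborel"
      by measurable
    fix x :: real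
    have pos: "0 < 1 + x^2" by (intro add_pos_nonneg) auto
    have G0: "G y \<ge> 0" for y unfolding G_def by (auto simp: indicator_def)
    have fle1: "(1 + x^2) powr (-p) \<le> 1"
    proof -
      have "(1 + x^2) powr (-p) \<le> 1 powr (-p)" by (rule powr_mono2') (use p in auto)
      then show ?thesis by simp
    qed
    have tail: "(1 + x^2) powr (-p) \<le> \<bar>x\<bar> powr e" if "\<bar>x\<bar> \<ge> 1"
    proof -
      have "(1 + x^2) powr (-p) \<le> (x^2) powr (-p)"
        by (rule powr_mono2') (use p that in auto)
      also have "(x^2) powr (-p) = \<bar>x\<bar> powr e"
      proof -
        have h: "x^2 = \<bar>x\<bar> powr 2" using that by (simp add: powr_realpow')
        have "(x^2) powr (-p) = (\<bar>x\<bar> powr 2) powr (-p)" by (simp only: h)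
        also have "\<dots> = \<bar>x\<bar> powr (2 * (-p))" by (rule powr_powr)
        finally show ?thesis unfolding e_def by simp
      qed
      finally show ?thesis .
    qed
    have "(1 + x^2) powr (-p) \<le> K x"
    proof (cases "\<bar>x\<bar> \<le> 1")
      case True
      then have "(1::real) * indicator {-1..1} x = 1" by (auto simp: indicator_def)
      then show ?thesis unfolding K_def using fle1 G0[of x] G0[of "0 + (-1) * x"] by linarith
    next
      case False
      show ?thesis
      proof (cases "x \<ge> 1")
        case True
        then have "G x = \<bar>x\<bar> powr e" unfolding G_def by (simp add: indicator_def)
        then show ?thesis unfolding K_def using tail False G0[of "0 + (-1) * x"] by (auto simp: indicator_def)
      next
        case False2: False
        then have "x \<le> -1" using False by linarith
        then have "G (0 + (-1) * x) = \<bar>x\<bar> powr e" unfolding G_def by (simp add: indicator_def)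
        then show ?thesis unfolding K_def using tail False G0[of x] by (auto simp: indicator_def)
      qed
    qed
    moreover have "K x \<ge> 0" unfolding K_def using G0[of x] G0[of "0 + (-1) * x"] by (auto simp: indicator_def)
    ultimately show "norm ((1 + x^2) powr (-p)) \<le> norm (K x)" by simp
  qed
qed

lemma integrable_prod_basis:
  fixes g :: "real \<Rightarrow> real"
  assumes gi: "integrable lborel g" and g0: "\<And>y. g y \<ge> 0"
  shows "integrable (lborel::'a::euclidean_space measure) (\<lambda>x. \<Prod>b\<in>Basis. g (x \<bullet> b))"
  unfolding integrable_iff_bounded
proof
  have gm: "g \<in> borel_measurable borel" using borel_measurable_integrable[OF gi] by simp
  show "(\<lambda>x::'a. \<Prod>b\<in>Basis. g (x \<bullet> b)) \<in> borel_measurable lborel"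
    using gm by measurable
  have "(\<integral>\<^sup>+x. ennreal (norm (\<Prod>b\<in>Basis. g (x \<bullet> b))) \<partial>(lborel::'a measure)) =
        (\<integral>\<^sup>+x. (\<Prod>b\<in>Basis. ennreal (g (x \<bullet> b))) \<partial>(lborel::'a measure))"
  proof -
    have eq: "ennreal (norm (\<Prod>b\<in>Basis. g (x \<bullet> b))) = (\<Prod>b\<in>Basis. ennreal (g (x \<bullet> b)))" for x :: 'a
    proof -
    have "norm (\<Prod>b\<in>Basis. g (x \<bullet> b)) = (\<Prod>b\<in>Basis. g (x \<bullet> b))"
      using g0 by (simp add: prod_nonneg)
    then show "ennreal (norm (\<Prod>b\<in>Basis. g (x \<bullet> b))) = (\<Prod>b\<in>Basis. ennreal (g (x \<bullet> b)))"
      using prod_ennreal[of Basis "\<lambda>b. g (x \<bullet> b)"] g0 by simp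
    qed
    show ?thesis by (simp only: eq)
  qed
  also have "\<dots> = (\<Prod>b\<in>(Basis::'a set). (\<integral>\<^sup>+y. ennreal (g y) \<partial>lborel))"
    by (rule nn_integral_lborel_prod) (use gm in auto)
  also have "\<dots> < \<infinity>"
  proof -
    have fin: "(\<integral>\<^sup>+y. ennreal (g y) \<partial>lborel) < \<infinity>"
    proof -
      have "(\<integral>\<^sup>+y. ennreal (norm (g y)) \<partial>lborel) < \<infinity>" using gi unfolding integrable_iff_bounded by blast
      then show ?thesis using g0 by simp
    qed
    then show ?thesis by (simp add: power_less_top_ennreal)
  qed
  finally show "(\<integral>\<^sup>+x. ennreal (norm (\<Prod>b\<in>Basis. g (x \<bullet> b))) \<partial>(lborel::'a measure)) < \<infinity>" .
qed

lemma integrable_decay: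
  fixes s :: real
  assumes s: "s > real DIM('a) / 2"
  shows "integrable (lborel::'a::euclidean_space measure) (\<lambda>x. (1 + norm x ^ 2) powr (-s))"
proof -
  define p where "p = s / real DIM('a)"
  have D: "real DIM('a) > 0" by simp
  have p: "p > 1/2" unfolding p_def using s D by (simp add: field_simps)
  have P: "integrable (lborel::'a measure) (\<lambda>x. \<Prod>b\<in>Basis. (1 + (x \<bullet> b)^2) powr (-p))"
    by (rule integrable_prod_basis[OF integrable_1d[OF p]]) simp
  show ?thesis
  proof (rule Bochner_Integration.integrable_bound[OF P _ AE_I2])
    show "(\<lambda>x::'a. (1 + norm x ^ 2) powr (-s)) \<in> borel_measurable lborel"
      by measurable
    fix x :: 'a
    have pos: "0 < 1 + norm x ^ 2" by (intro add_pos_nonneg) auto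
    have "(\<Prod>b\<in>(Basis::'a set). (1 + norm x ^ 2) powr (-p)) \<le> (\<Prod>b\<in>Basis. (1 + (x \<bullet> b)^2) powr (-p))"
    proof (rule prod_mono)
      fix b :: 'a assume b: "b \<in> Basis"
      have "(x \<bullet> b)^2 \<le> norm x ^ 2"
      proof -
        have "\<bar>x \<bullet> b\<bar> \<le> norm x" by (rule Basis_le_norm[OF b])
        then have "\<bar>x \<bullet> b\<bar>^2 \<le> norm x ^ 2" by (intro power_mono) auto
        then show ?thesis by simp
      qed
      then show "0 \<le> (1 + norm x ^ 2) powr (-p) \<and> (1 + norm x ^ 2) powr (-p) \<le> (1 + (x \<bullet> b)^2) powr (-p)"
        using p by (auto intro!: powr_mono2' add_pos_nonneg)
    qed
    moreover have "(\<Prod>b\<in>(Basis::'a set). (1 + norm x ^ 2) powr (-p)) = (1 + norm x ^ 2) powr (-s)"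
    proof -
      have "(\<Prod>b\<in>(Basis::'a set). (1 + norm x ^ 2) powr (-p)) = ((1 + norm x ^ 2) powr (-p)) ^ DIM('a)" by simp
      also have "\<dots> = (1 + norm x ^ 2) powr (real DIM('a) * (-p))" using pos by (simp add: powr_power)
      also have "real DIM('a) * (-p) = -s" unfolding p_def using D by simp
      finally show ?thesis .
    qed
    moreover have "(\<Prod>b\<in>(Basis::'a set). (1 + (x \<bullet> b)^2) powr (-p)) \<ge> 0" by (simp add: prod_nonneg)
    ultimately show "norm ((1 + norm x ^ 2) powr (-s)) \<le> norm (\<Prod>b\<in>Basis. (1 + (x \<bullet> b)^2) powr (-p))"
      by simp
  qed
qed



lemma exp_ge_term:
  assumes "x \<ge> 0"
  shows "x^N / fact N \<le> exp (x::real)"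
proof -
  have s: "(\<lambda>n. x^n / fact n) sums exp x" using exp_converges[of x] by (simp add: divide_inverse_commute)
  have "(\<Sum>n\<in>{N}. x^n / fact n) \<le> (\<Sum>n. x^n / fact n)"
    by (rule sum_le_suminf[OF sums_summable[OF s]]) (use assms in auto)
  then show ?thesis using sums_unique[OF s] by simp
qed

lemma cont_dsincE: "continuous_on UNIV ((deriv ^^ k) (sincE t))"
proof -
  have e: "(deriv ^^ k) (sincE t) = (\<lambda>x. Re ((deriv ^^ k) (Sc t) (complex_of_real x)))"
    by (rule ext) (rule sincE_deriv)
  have c: "continuous_on UNIV ((deriv ^^ k) (Sc t))"
    by (rule holomorphic_on_imp_continuous_on[OF holomorphic_higher_deriv[OF Sc_holo open_UNIV]])
  have "continuous_on UNIV (\<lambda>x::real. (deriv ^^ k) (Sc t) (complex_of_real x))"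
    by (rule continuous_on_compose2[OF c]) (auto intro!: continuous_intros)
  then show ?thesis unfolding e by (intro continuous_intros)
qed

lemma D2_bound:
  assumes t: "t \<ge> 1" and r: "norm \<xi> \<ge> 1"
  shows "\<bar>D2 l \<xi> t\<bar> \<le> real l * 2 * (8 * norm \<xi>^2)^l * exp (-(4/5) * t * norm \<xi>^2)"
proof -
  let ?r = "norm \<xi>"
  have rp: "?r > 0" using r by linarith
  have "?r^2 \<ge> 1" using r by (simp add: one_le_power)
  then have r8: "8 * ?r^2 \<ge> 1" by linarith
  have each: "\<bar>1 / fact k * (deriv ^^ k) (\<lambda>a. hH ?r a t) 0\<bar> \<le> 2 * (8 * ?r^2)^l * exp (-(4/5) * t * ?r^2)"
    if "k < l" for k
  proof -
    have "\<bar>(deriv ^^ k) (\<lambda>a. hH ?r a t) 0\<bar> = \<bar>Re ((deriv ^^ k) (hc ?r t) 0)\<bar>" by (simp add: hH_deriv[OF rp])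
    also have "\<dots> \<le> norm ((deriv ^^ k) (hc ?r t) 0)" by (rule abs_Re_le_cmod)
    also have "\<dots> \<le> fact k * (2 * exp (-(4/5)*t*?r^2)) / (1/(8*?r^2))^k"
      by (rule hc_deriv_bound[OF rp]) (use t in simp)
    also have "\<dots> = fact k * (2 * exp (-(4/5)*t*?r^2) * (8 * ?r^2)^k)"
      by (simp add: power_divide field_simps)
    finally have a: "\<bar>(deriv ^^ k) (\<lambda>a. hH ?r a t) 0\<bar> \<le> fact k * (2 * exp (-(4/5)*t*?r^2) * (8 * ?r^2)^k)" .
    have "(8 * ?r^2)^k \<le> (8 * ?r^2)^l" using that r8 by (intro power_increasing) auto
    then have b: "2 * exp (-(4/5)*t*?r^2) * (8 * ?r^2)^k \<le> 2 * (8 * ?r^2)^l * exp (-(4/5) * t * ?r^2)"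
      by (simp add: mult.commute mult.left_commute)
    have "\<bar>1 / fact k * (deriv ^^ k) (\<lambda>a. hH ?r a t) 0\<bar> = \<bar>(deriv ^^ k) (\<lambda>a. hH ?r a t) 0\<bar> / fact k"
      by (simp add: abs_mult)
    also have "\<dots> \<le> fact k * (2 * exp (-(4/5)*t*?r^2) * (8 * ?r^2)^k) / fact k"
      by (intro divide_right_mono a) simp
    also have "\<dots> = 2 * exp (-(4/5)*t*?r^2) * (8 * ?r^2)^k" by simp
    also have "\<dots> \<le> 2 * (8 * ?r^2)^l * exp (-(4/5) * t * ?r^2)" by (rule b)
    finally show ?thesis .
  qed
  have "\<bar>D2 l \<xi> t\<bar> \<le> (\<Sum>k<l. \<bar>1 / fact k * (deriv ^^ k) (\<lambda>a. hH ?r a t) 0\<bar>)"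
    unfolding D2_def by (rule sum_abs)
  also have "\<dots> \<le> (\<Sum>k<l. 2 * (8 * ?r^2)^l * exp (-(4/5) * t * ?r^2))"
    by (rule sum_mono) (use each in auto)
  also have "\<dots> = real l * 2 * (8 * ?r^2)^l * exp (-(4/5) * t * ?r^2)" by simp
  finally show ?thesis .
qed



lemma g_bound:
  assumes r: "r \<ge> (1::real)"
  shows "6 * 2^b / r^b + real l * 2 * (8 * r^2)^l * exp (-(3/10) * r^2)
     \<le> (6 * 2^b + real l * 2 * 8^l * ((10/3)^(b+2*l) * fact (b+2*l))) / r^b"
proof -
  let ?N = "b + 2*l"
  define x where "x = (3/10) * r^2"
  have x0: "x \<ge> 0" unfolding x_def by simp
  have rp: "r > 0" using r by simp
  have "r^(b+2*l) \<le> (r^2)^(b+2*l)"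
  proof -
    have h1: "r^(b+2*l) \<le> r^(2*(b+2*l))" using r by (intro power_increasing) auto
    have h2: "r^(2*(b+2*l)) = (r^2)^(b+2*l)" by (rule power_mult)
    show ?thesis using h1 unfolding h2 .
  qed
  also have "(r^2)^(b+2*l) = (10/3)^?N * x^?N" unfolding x_def by (simp add: power_mult_distrib[symmetric])
  also have "\<dots> \<le> (10/3)^?N * (fact ?N * exp x)"
  proof -
    have "x^?N / fact ?N \<le> exp x" by (rule exp_ge_term[OF x0])
    then have "x^?N \<le> fact ?N * exp x" by (simp add: divide_le_eq mult.commute)
    then show ?thesis by (intro mult_left_mono) auto
  qed
  finally have k: "r^(b+2*l) \<le> (10/3)^?N * fact ?N * exp x" by (simp add: mult.assoc)
  have "(8 * r^2)^l * exp (-x) = 8^l * (r^(b+2*l) * exp (-x)) / r^b"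
  proof -
    have pr: "(r^2)^l = (r^l)^2" by (simp only: power_mult[symmetric] mult.commute)
    show ?thesis using rp by (simp add: power_mult_distrib power_add power_mult field_simps pr)
  qed
  also have "\<dots> \<le> 8^l * ((10/3)^?N * fact ?N * exp x * exp (-x)) / r^b"
    using k rp by (intro divide_right_mono mult_left_mono mult_right_mono) auto
  also have "\<dots> = 8^l * ((10/3)^?N * fact ?N) / r^b" by (simp add: exp_minus field_simps)
  finally have e: "(8 * r^2)^l * exp (-(3/10) * r^2) \<le> 8^l * ((10/3)^?N * fact ?N) / r^b"
    unfolding x_def by simp
  have "real l * 2 * (8 * r^2)^l * exp (-(3/10) * r^2) = real l * 2 * ((8 * r^2)^l * exp (-(3/10) * r^2))" by simp
  also have "\<dots> \<le> real l * 2 * (8^l * ((10/3)^?N * fact ?N) / r^b)"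
    by (intro mult_left_mono e) auto
  finally have e2: "real l * 2 * (8 * r^2)^l * exp (-(3/10) * r^2) \<le> real l * 2 * (8^l * ((10/3)^?N * fact ?N) / r^b)" .
  show ?thesis using e2 by (simp add: add_divide_distrib)
qed

lemma pointwise:
  assumes t: "t \<ge> 1" and b: "b \<ge> 1" and r: "norm \<xi> \<ge> 1" and M: "\<bar>chiH (norm \<xi>)\<bar> \<le> Mc"
  shows "\<bar>m2 chiH b l \<xi> t\<bar> \<le> t^(b-1) * exp (-t/2) *
      (Mc * (6 * 2^b / norm \<xi>^b + real l * 2 * (8 * norm \<xi>^2)^l * exp (-(3/10) * norm \<xi>^2)))"
proof -
  let ?r = "norm \<xi>"
  have M0: "Mc \<ge> 0" using M by linarith
  have tb: "t^(b-1) \<ge> 1" using t by (simp add: one_le_power)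
  have r2: "?r^2 \<ge> 1" using r by (simp add: one_le_power)
  have SW: "\<bar>sincE t (?r^2 - 1/4) - W2 b \<xi> t\<bar> \<le> 6 * 2^b * t^(b-1) / ?r^b"
    by (rule main_bound[OF t b r])
  have D: "\<bar>D2 l \<xi> t\<bar> \<le> real l * 2 * (8 * ?r^2)^l * exp (-(4/5) * t * ?r^2)"
    by (rule D2_bound[OF t r])
  have ex: "exp (-(4/5) * t * ?r^2) \<le> t^(b-1) * exp (-t/2) * exp (-(3/10) * ?r^2)"
  proof -
    have "(1/2) * t + (3/10) * ?r^2 \<le> (4/5) * t * ?r^2"
    proof -
      have "t \<le> t * ?r^2" using r2 t by (simp add: mult_le_cancel_left1)
      moreover have "?r^2 \<le> t * ?r^2" using r2 t by (simp add: mult_le_cancel_right1)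
      ultimately show ?thesis by linarith
    qed
    then have "exp (-(4/5) * t * ?r^2) \<le> exp (-t/2) * exp (-(3/10) * ?r^2)"
      by (simp add: exp_add[symmetric])
    also have "\<dots> \<le> t^(b-1) * (exp (-t/2) * exp (-(3/10) * ?r^2))"
    proof -
      have "1 * (exp (-t/2) * exp (-(3/10) * ?r^2)) \<le> t^(b-1) * (exp (-t/2) * exp (-(3/10) * ?r^2))"
        using tb by (intro mult_right_mono) auto
      then show ?thesis by simp
    qed
    finally show ?thesis by (simp add: mult.assoc)
  qed
  have D': "\<bar>D2 l \<xi> t\<bar> \<le> t^(b-1) * exp (-t/2) * (real l * 2 * (8 * ?r^2)^l * exp (-(3/10) * ?r^2))"
  proof -
    have "real l * 2 * (8 * ?r^2)^l * exp (-(4/5) * t * ?r^2) \<le> real l * 2 * (8 * ?r^2)^l * (t^(b-1) * exp (-t/2) * exp (-(3/10) * ?r^2))"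
      by (intro mult_left_mono ex) auto
    then show ?thesis using D by (simp add: mult_ac)
  qed
  have SW': "\<bar>exp (-t/2) * (sincE t (?r^2 - 1/4) - W2 b \<xi> t)\<bar> \<le> t^(b-1) * exp (-t/2) * (6 * 2^b / ?r^b)"
  proof -
    have "\<bar>exp (-t/2) * (sincE t (?r^2 - 1/4) - W2 b \<xi> t)\<bar> = exp (-t/2) * \<bar>sincE t (?r^2 - 1/4) - W2 b \<xi> t\<bar>"
      by (simp add: abs_mult)
    also have "\<dots> \<le> exp (-t/2) * (6 * 2^b * t^(b-1) / ?r^b)" by (intro mult_left_mono SW) auto
    finally show ?thesis by (simp add: mult_ac)
  qed
  have "m2 chiH b l \<xi> t = chiH ?r * (exp (-t/2) * (sincE t (?r^2 - 1/4) - W2 b \<xi> t) - D2 l \<xi> t)"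
    unfolding m2_def by (simp add: algebra_simps)
  then have "\<bar>m2 chiH b l \<xi> t\<bar> = \<bar>chiH ?r\<bar> * \<bar>exp (-t/2) * (sincE t (?r^2 - 1/4) - W2 b \<xi> t) - D2 l \<xi> t\<bar>"
    by (simp add: abs_mult)
  also have "\<dots> \<le> Mc * (t^(b-1) * exp (-t/2) * (6 * 2^b / ?r^b) + t^(b-1) * exp (-t/2) * (real l * 2 * (8 * ?r^2)^l * exp (-(3/10) * ?r^2)))"
  proof (rule mult_mono[OF M])
    show "\<bar>exp (-t/2) * (sincE t (?r^2 - 1/4) - W2 b \<xi> t) - D2 l \<xi> t\<bar> \<le>
      t^(b-1) * exp (-t/2) * (6 * 2^b / ?r^b) + t^(b-1) * exp (-t/2) * (real l * 2 * (8 * ?r^2)^l * exp (-(3/10) * ?r^2))"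
      using SW' D' abs_triangle_ineq4[of "exp (-t/2) * (sincE t (?r^2 - 1/4) - W2 b \<xi> t)" "D2 l \<xi> t"] by linarith
  qed (use M0 in auto)
  also have "\<dots> = t^(b-1) * exp (-t/2) * (Mc * (6 * 2^b / ?r^b + real l * 2 * (8 * ?r^2)^l * exp (-(3/10) * ?r^2)))"
    by (simp add: algebra_simps)
  finally show ?thesis .
qed



lemma meas_m2:
  assumes t: "t \<ge> 1" and cc: "continuous_on {0<..} chiH" and z: "\<forall>r\<in>{0..1}. chiH r = 0"
  shows "(\<lambda>\<xi>::'a::euclidean_space. (m2 chiH b l \<xi> t)^2) \<in> borel_measurable lborel"
proof -
  let ?S = "{1/2<..} :: real set"
  define WW where "WW = (if b \<ge> 2 then (\<lambda>r. \<Sum>k<b-1. (deriv ^^ k) (sincE t) (r^2) / fact k * (-1/4)^k) else (\<lambda>r. 0))"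
  define DD where "DD = (\<lambda>r. \<Sum>k<l. 1 / fact k * Re ((deriv ^^ k) (hc r t) 0))"
  define Mf where "Mf = (\<lambda>r. chiH r * (exp (-t/2) * sincE t (r^2 - 1/4) - exp (-t/2) * WW r - DD r))"
  have eq: "m2 chiH b l \<xi> t = indicator ?S (norm \<xi>) *\<^sub>R Mf (norm \<xi>)" for \<xi> :: 'a
  proof (cases "norm \<xi> > 1/2")
    case True
    have W: "W2 b \<xi> t = WW (norm \<xi>)"
    proof (cases "b \<ge> 2")
      case True
      then show ?thesis unfolding WW_def using W2_formula[of t b \<xi>] t by simp
    next
      case False
      then show ?thesis unfolding WW_def W2_def by simp
    qed
    have np: "norm \<xi> > 0" using True by linarith
    have D: "D2 l \<xi> t = DD (norm \<xi>)"
      unfolding D2_def DD_def by (intro sum.cong refl) (simp only: hH_deriv[OF np])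
    show ?thesis using True unfolding m2_def Mf_def W D by simp
  next
    case False
    then have "chiH (norm \<xi>) = 0" using z by simp
    then show ?thesis using False unfolding m2_def by simp
  qed
  have c1: "continuous_on ?S (\<lambda>r. sincE t (r^2 - 1/4))"
    by (rule continuous_on_compose2[OF cont_dsincE[of 0 t, simplified]]) (auto intro!: continuous_intros)
  have c2: "continuous_on ?S (\<lambda>r. (deriv ^^ k) (sincE t) (r^2))" for k
    by (rule continuous_on_compose2[OF cont_dsincE[of k t]]) (auto intro!: continuous_intros)
  have c3: "continuous_on ?S (\<lambda>r. (deriv ^^ k) (hc r t) 0)" for k
    by (rule continuous_on_subset[OF hc_deriv_cont]) auto
  have cW: "continuous_on ?S WW"
    unfolding WW_def using c2 by (auto intro!: continuous_intros)
  have cD: "continuous_on ?S DD"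
    unfolding DD_def using c3 by (auto intro!: continuous_intros)
  have cX: "continuous_on ?S chiH" by (rule continuous_on_subset[OF cc]) auto
  have cM: "continuous_on ?S Mf"
    unfolding Mf_def using cX c1 cW cD by (intro continuous_intros)
  have bm: "(\<lambda>x. indicator ?S x *\<^sub>R Mf x) \<in> borel_measurable borel"
    by (rule borel_measurable_continuous_on_indicator[OF _ cM]) auto
  have "(\<lambda>\<xi>::'a. indicator ?S (norm \<xi>) *\<^sub>R Mf (norm \<xi>)) \<in> borel_measurable lborel"
    using bm by measurable
  then have "(\<lambda>\<xi>::'a. m2 chiH b l \<xi> t) \<in> borel_measurable lborel" unfolding eq .
  then show ?thesis by measurable
qed



theorem proposition2:
  fixes chiH :: "real \<Rightarrow> real" and b l :: nat
  assumes "real b > real CARD('n::finite) / 2"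
    and "\<forall>k. (deriv ^^ k) chiH differentiable_on {0<..}"
    and "\<forall>r\<ge>2. chiH r = 1"
    and "\<forall>r\<in>{0..1}. chiH r = 0"
  shows "\<exists>C>0. \<forall>t\<ge>1.
           integrable lborel (\<lambda>\<xi>::real^'n. (m2 chiH b l \<xi> t)^2) \<and>
           sqrt (integral\<^sup>L lborel (\<lambda>\<xi>::real^'n. (m2 chiH b l \<xi> t)^2)) \<le> C * t^(b-1) * exp (-t/2)"
proof -
  have card: "real CARD('n) \<ge> 1" by simp
  have b1: "b \<ge> 1"
  proof (rule ccontr)
    assume "\<not> b \<ge> 1"
    then have "b = 0" by simp
    then show False using assms(1) card by simp
  qed
  have cc: "continuous_on {0<..} chiH"
    using assms(2)[rule_format, of 0] by (simp add: differentiable_imp_continuous_on)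
  have "compact (chiH ` {1..2})"
    by (rule compact_continuous_image[OF continuous_on_subset[OF cc]]) auto
  then have "bounded (chiH ` {1..2})" by (rule compact_imp_bounded)
  then obtain M0 where M0: "\<And>x. x \<in> chiH ` {1..2} \<Longrightarrow> norm x \<le> M0" unfolding bounded_iff by blast
  define Mc where "Mc = max M0 1"
  have Mc1: "Mc \<ge> 1" unfolding Mc_def by simp
  have Mb: "\<bar>chiH r\<bar> \<le> Mc" if "r \<ge> 0" for r
  proof -
    consider "r \<le> 1" | "r \<ge> 2" | "1 \<le> r \<and> r \<le> 2" by linarith
    then show ?thesis
    proof cases
      case 1 then show ?thesis using assms(4) that Mc1 by simp
    next
      case 2 then show ?thesis using assms(3) Mc1 by simp
    next
      case 3 then have "norm (chiH r) \<le> M0" using M0 by auto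
      then show ?thesis unfolding Mc_def by simp
    qed
  qed
  define A where "A = (6 * 2^b + real l * 2 * 8^l * ((10/3)^(b+2*l) * fact (b+2*l)) :: real)"
  have A0: "A > 0" unfolding A_def by (intro add_pos_nonneg) auto
  define Dc where "Dc = (Mc * A)^2 * 2^b"
  define Dom where "Dom = (\<lambda>\<xi>::real^'n. Dc * (1 + norm \<xi>^2) powr (- real b))"
  have Domi: "integrable lborel Dom"
  proof -
    have "real b > real DIM(real^'n) / 2" using assms(1) by simp
    from integrable_decay[OF this] show ?thesis unfolding Dom_def by (rule integrable_mult_right)
  qed
  have Dom0: "Dom \<xi> \<ge> 0" for \<xi> unfolding Dom_def Dc_def by simp
  define I where "I = integral\<^sup>L lborel Dom"
  have I0: "I \<ge> 0" unfolding I_def using Dom0 by (simp add: integral_nonneg)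
  have pw: "(m2 chiH b l \<xi> t)^2 \<le> (t^(b-1) * exp (-t/2))^2 * Dom \<xi>" if t: "t \<ge> 1" for t and \<xi> :: "real^'n"
  proof (cases "norm \<xi> \<ge> 1")
    case False
    then have "chiH (norm \<xi>) = 0" using assms(4) by simp
    then have "m2 chiH b l \<xi> t = 0" unfolding m2_def by simp
    then show ?thesis using Dom0[of \<xi>] by simp
  next
    case True
    let ?r = "norm \<xi>"
    have rp: "?r > 0" using True by linarith
    let ?c = "t^(b-1) * exp (-t/2)"
    have c0: "?c > 0" using t by simp
    have "\<bar>m2 chiH b l \<xi> t\<bar> \<le> ?c * (Mc * (6 * 2^b / ?r^b + real l * 2 * (8 * ?r^2)^l * exp (-(3/10) * ?r^2)))"
      by (rule pointwise[OF t b1 True Mb]) simp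
    also have "\<dots> \<le> ?c * (Mc * (A / ?r^b))"
      unfolding A_def using g_bound[OF True, of b l] c0 Mc1 by (intro mult_left_mono) auto
    finally have m: "\<bar>m2 chiH b l \<xi> t\<bar> \<le> ?c * (Mc * (A / ?r^b))" .
    then have "(m2 chiH b l \<xi> t)^2 \<le> (?c * (Mc * (A / ?r^b)))^2"
      by (metis abs_ge_zero power2_abs power_mono)
    also have "\<dots> = ?c^2 * ((Mc * A)^2 / (?r^2)^b)"
      by (simp add: power_mult_distrib power_divide power_mult[symmetric] mult.commute)
    also have "\<dots> \<le> ?c^2 * Dom \<xi>"
    proof (rule mult_left_mono)
      have pos: "1 + ?r^2 > 0" by (intro add_pos_nonneg) auto
      have "(1 + ?r^2)^b \<le> (2 * ?r^2)^b"
        using True by (intro power_mono) (auto simp: one_le_power)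
      then have "(1 + ?r^2)^b \<le> 2^b * (?r^2)^b" by (simp add: power_mult_distrib)
      then have "1 / (?r^2)^b \<le> 2^b / (1 + ?r^2)^b"
        using pos rp by (simp add: field_simps)
      moreover have "(1 + ?r^2) powr (- real b) = 1 / (1 + ?r^2)^b"
        using pos by (simp add: powr_minus powr_realpow divide_inverse)
      ultimately have "(Mc * A)^2 * (1 / (?r^2)^b) \<le> (Mc * A)^2 * (2^b * (1 + ?r^2) powr (- real b))"
        by (intro mult_left_mono) auto
      then show "(Mc * A)^2 / (?r^2)^b \<le> Dom \<xi>" unfolding Dom_def Dc_def by (simp add: mult_ac)
    qed simp
    finally show ?thesis by (simp add: power_mult_distrib)
  qed
  show ?thesis
  proof (intro exI[of _ "sqrt I + 1"] conjI allI impI)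
    show "sqrt I + 1 > 0" using I0 by (smt (verit) real_sqrt_ge_zero)
    fix t :: real assume t: "t \<ge> 1"
    let ?c = "t^(b-1) * exp (-t/2)"
    have c0: "?c > 0" using t by simp
    have meas: "(\<lambda>\<xi>::real^'n. (m2 chiH b l \<xi> t)^2) \<in> borel_measurable lborel"
      by (rule meas_m2[OF t cc assms(4)])
    have Di: "integrable lborel (\<lambda>\<xi>. ?c^2 * Dom \<xi>)" by (rule integrable_mult_right[OF Domi])
    show int: "integrable lborel (\<lambda>\<xi>::real^'n. (m2 chiH b l \<xi> t)^2)"
    proof (rule Bochner_Integration.integrable_bound[OF Di meas AE_I2])
      fix \<xi> :: "real^'n"
      show "norm ((m2 chiH b l \<xi> t)^2) \<le> norm (?c^2 * Dom \<xi>)"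
        using pw[OF t, of \<xi>] Dom0[of \<xi>] by simp
    qed
    have "integral\<^sup>L lborel (\<lambda>\<xi>::real^'n. (m2 chiH b l \<xi> t)^2) \<le> integral\<^sup>L lborel (\<lambda>\<xi>. ?c^2 * Dom \<xi>)"
      by (rule integral_mono[OF int Di]) (use pw[OF t] in auto)
    also have "\<dots> = ?c^2 * I" unfolding I_def by simp
    finally have "sqrt (integral\<^sup>L lborel (\<lambda>\<xi>::real^'n. (m2 chiH b l \<xi> t)^2)) \<le> sqrt (?c^2 * I)"
      by (rule real_sqrt_le_mono)
    also have "\<dots> = ?c * sqrt I" using c0 by (simp add: real_sqrt_mult)
    also have "\<dots> \<le> ?c * (sqrt I + 1)" using c0 by (intro mult_left_mono) auto
    also have "\<dots> = (sqrt I + 1) * t^(b-1) * exp (-t/2)" by simp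
    finally show "sqrt (integral\<^sup>L lborel (\<lambda>\<xi>::real^'n. (m2 chiH b l \<xi> t)^2)) \<le> (sqrt I + 1) * t^(b-1) * exp (-t/2)" .
  qed
qed


end
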